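(* Let $\mathcal D=\{x\in\mathbb R^d:Bx\le c\}$ be a nonempty bounded polytope, $A\in\mathbb R^{m\times d}$, $b\in\mathbb R^d$, and $f(x):=g(Ax)+\langle b,x\rangle$, where $g$ is continuously differentiable on an open set containing $A\mathcal D$ and $\mu_g$-strongly convex on $A\mathcal D$ (Euclidean norm) with $\mu_g>0$. Let $\mathcal X^*:=\arg\min_{x\in\mathcal D}f(x)$, $G:=\max_{x\in\mathcal D}\|\nabla g(Ax)\|$, $M:=\mathrm{diam}(\mathcal D)$, $M_A:=\mathrm{diam}(A\mathcal D)$, and let $\theta>0$ be a Hoffman constant for the matrix $\begin{pmatrix}A\\ b^\top\\ B\end{pmatrix}$ as defined in the context. Then for every $x\in\mathcal D$ and $x^*\in\mathcal X^*$, $$f(x^* )-f(x)-2\langle\nabla f(x),x^*-x\rangle\ \ge\ 2\tilde\mu\,d(x,\mathcal X^* )^2,\qquad \tilde\mu:=\frac{1}{2\theta^2\big(\|b\|M+3GM_A+\frac{2}{\mu_g}(G^2+1)\big)}.$$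
   Context: Euclidean norms; $d(x,\mathcal X^* )=\min_{y\in\mathcal X^*}\|x-y\|$; diameters are Euclidean. Hoffman constant: $\theta>0$ is such that for every $t\in\mathbb R^m$ and $s\in\mathbb R$ for which $P_{t,s}:=\{y\in\mathbb R^d:Ay=t,\ \langle b,y\rangle=s,\ By\le c\}$ is nonempty, and every $x$ with $Bx\le c$, one has $d(x,P_{t,s})\le\theta\,\|(Ax-t,\ \langle b,x\rangle-s)\|$. *)

theory Defs
  imports "HOL-Analysis.Analysis"
begin

definition strongly_convex_on :: "'a::real_inner set \<Rightarrow> real \<Rightarrow> ('a \<Rightarrow> real) \<Rightarrow> bool" where
  "strongly_convex_on S mu g \<longleftrightarrow>
     (\<forall>x\<in>S. \<forall>y\<in>S. \<forall>t::real. 0 \<le> t \<and> t \<le> 1 \<longrightarrow>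
        g (t *\<^sub>R x + (1 - t) *\<^sub>R y) \<le> t * g x + (1 - t) * g y - mu / 2 * t * (1 - t) * (norm (x - y))\<^sup>2)"

definition polyhedron :: "real^'d^'k \<Rightarrow> real^'k \<Rightarrow> (real^'d) set" where
  "polyhedron B c = {y. \<forall>i. (B *v y) $ i \<le> c $ i}"

definition hoffman_constant :: "real^'d^'m \<Rightarrow> real^'d \<Rightarrow> real^'d^'k \<Rightarrow> real^'k \<Rightarrow> real \<Rightarrow> bool" where
  "hoffman_constant A b B c \<theta> \<longleftrightarrow> \<theta> > 0 \<and>
     (\<forall>(t::real^'m) (s::real).
        let P = {y \<in> polyhedron B c. A *v y = t \<and> b \<bullet> y = s} in
        P \<noteq> {} \<longrightarrow>
        (\<forall>x \<in> polyhedron B c. infdist x P \<le> \<theta> * norm (A *v x - t, b \<bullet> x - s)))"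

end

theory Submission
  imports Defs
begin
lemma grad_ineq:
  fixes g :: "'a::real_inner \<Rightarrow> real"
  assumes sc: "strongly_convex_on S mu g" and xS: "x \<in> S" and yS: "y \<in> S"
    and der: "(g has_derivative (\<lambda>h. gg \<bullet> h)) (at x)"
  shows "g x + gg \<bullet> (y - x) + mu/2 * (norm (y - x))\<^sup>2 \<le> g y"
proof -
  define \<phi> where "\<phi> = (\<lambda>t::real. g (x + t *\<^sub>R (y - x)))"
  have d1: "((\<lambda>t::real. x + t *\<^sub>R (y - x)) has_derivative (\<lambda>t. t *\<^sub>R (y - x))) (at 0)"
    by (auto intro!: derivative_eq_intros)
  have "((g \<circ> (\<lambda>t::real. x + t *\<^sub>R (y - x))) has_derivative ((\<lambda>h. gg \<bullet> h) \<circ> (\<lambda>t. t *\<^sub>R (y - x)))) (at 0)"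
    by (rule diff_chain_at[OF d1]) (simp add: der)
  moreover have "((\<lambda>h. gg \<bullet> h) \<circ> (\<lambda>t. t *\<^sub>R (y - x))) = (*) (gg \<bullet> (y - x))"
    by (auto simp: fun_eq_iff)
  ultimately have "(\<phi> has_field_derivative (gg \<bullet> (y - x))) (at 0)"
    unfolding has_field_derivative_def \<phi>_def by (simp add: o_def)
  hence "((\<lambda>t. (\<phi> t - \<phi> 0) / (t - 0)) \<longlongrightarrow> gg \<bullet> (y - x)) (at 0)"
    by (simp add: has_field_derivative_iff)
  hence L1: "((\<lambda>t. (\<phi> t - \<phi> 0) / (t - 0)) \<longlongrightarrow> gg \<bullet> (y - x)) (at_right 0)"
    by (rule tendsto_within_subset) auto
  define n where "n = (norm (y - x))\<^sup>2"
  have L2: "((\<lambda>t. g y - g x - mu/2 * (1 - t) * n) \<longlongrightarrow> g y - g x - mu/2 * (1 - 0) * n) (at_right 0)"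
    by (intro tendsto_intros)
  have ev: "eventually (\<lambda>t. (\<phi> t - \<phi> 0) / (t - 0) \<le> g y - g x - mu/2 * (1 - t) * n) (at_right 0)"
    using eventually_at_right_real[of 0 "1::real", OF zero_less_one]
  proof (rule eventually_mono)
    fix t :: real assume t: "t \<in> {0<..<1}"
    have "g (t *\<^sub>R y + (1 - t) *\<^sub>R x) \<le> t * g y + (1 - t) * g x - mu / 2 * t * (1 - t) * (norm (y - x))\<^sup>2"
      using sc xS yS t unfolding strongly_convex_on_def by auto
    moreover have "t *\<^sub>R y + (1 - t) *\<^sub>R x = x + t *\<^sub>R (y - x)" by (simp add: algebra_simps)
    ultimately have "\<phi> t - \<phi> 0 \<le> t * (g y - g x - mu/2 * (1 - t) * n)"
      unfolding \<phi>_def n_def by (simp add: algebra_simps)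
    thus "(\<phi> t - \<phi> 0) / (t - 0) \<le> g y - g x - mu/2 * (1 - t) * n"
      using t by (simp add: pos_divide_le_eq mult.commute)
  qed
  have "gg \<bullet> (y - x) \<le> g y - g x - mu/2 * (1 - 0) * n"
    by (rule tendsto_le[OF trivial_limit_at_right_real L2 L1 ev])
  thus ?thesis unfolding n_def by simp
qed

lemma transp_inner: fixes A :: "real^'d^'m"
  shows "(transpose A *v w) \<bullet> h = w \<bullet> (A *v h)"
proof -
  have "(transpose A *v w) \<bullet> h = (\<Sum>i\<in>UNIV. \<Sum>j\<in>UNIV. A$j$i * w$j * h$i)"
    unfolding inner_vec_def matrix_vector_mult_def transpose_def
    by (simp add: sum_distrib_right sum_distrib_left mult_ac)
  also have "\<dots> = (\<Sum>j\<in>UNIV. \<Sum>i\<in>UNIV. A$j$i * w$j * h$i)" by (rule sum.swap)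
  also have "\<dots> = w \<bullet> (A *v h)"
    unfolding inner_vec_def matrix_vector_mult_def
    by (simp add: sum_distrib_left mult_ac)
  finally show ?thesis .
qed

lemma polyhedron_convex: "convex (polyhedron B c)"
  unfolding convex_def polyhedron_def
proof (clarsimp)
  fix x y :: "real^'a" and u v :: real and i
  assume x: "\<forall>i. (B *v x) $ i \<le> c $ i" and y: "\<forall>i. (B *v y) $ i \<le> c $ i"
    and u: "0 \<le> u" and v: "0 \<le> v" and uv: "u + v = 1"
  have "(B *v (u *\<^sub>R x + v *\<^sub>R y)) $ i = u * (B *v x) $ i + v * (B *v y) $ i"
    by (simp add: matrix_vector_right_distrib matrix_vector_mult_scaleR)
  also have "\<dots> \<le> u * c $ i + v * c $ i"
    using x y u v by (intro add_mono mult_left_mono) auto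
  also have "\<dots> = c $ i" using uv by (simp flip: distrib_right)
  finally show "(B *v (u *\<^sub>R x + v *\<^sub>R y)) $ i \<le> c $ i" .
qed

lemma polyhedron_closed: "closed (polyhedron B c)"
proof -
  have "polyhedron B c = (\<Inter>i. {y. (B *v y) $ i \<le> c $ i})" unfolding polyhedron_def by auto
  moreover have "closed {y. (B *v y) $ i \<le> c $ i}" for i
    by (intro closed_Collect_le continuous_intros)
  ultimately show ?thesis by auto
qed

theorem mainTheorem10:
  fixes A :: "real^'d^'m" and b :: "real^'d" and B :: "real^'d^'k" and c :: "real^'k"
    and g :: "real^'m \<Rightarrow> real" and gg :: "real^'m \<Rightarrow> real^'m"
    and U :: "(real^'m) set" and mu_g \<theta> :: real
  defines "D \<equiv> polyhedron B c"
    and "f \<equiv> (\<lambda>x. g (A *v x) + b \<bullet> x)"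
    and "grad_f \<equiv> (\<lambda>x. transpose A *v gg (A *v x) + b)"
  assumes D_ne: "D \<noteq> {}" and D_bdd: "bounded D"
    and U_open: "open U" and U_sup: "(\<lambda>x. A *v x) ` D \<subseteq> U"
    and g_diff: "\<And>y. y \<in> U \<Longrightarrow> (g has_derivative (\<lambda>h. gg y \<bullet> h)) (at y)"
    and gg_cont: "continuous_on U gg"
    and mu_pos: "mu_g > 0"
    and g_sc: "strongly_convex_on ((\<lambda>x. A *v x) ` D) mu_g g"
    and hoff: "hoffman_constant A b B c \<theta>"
  shows "\<forall>x\<in>D. \<forall>xs\<in>{z \<in> D. \<forall>y\<in>D. f z \<le> f y}.
     (let G = Sup ((\<lambda>x. norm (gg (A *v x))) ` D);
          M = diameter D;
          M_A = diameter ((\<lambda>x. A *v x) ` D);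
          mu_t = 1 / (2 * \<theta>\<^sup>2 * (norm b * M + 3 * G * M_A + 2 / mu_g * (G\<^sup>2 + 1)))
      in f xs - f x - 2 * (grad_f x \<bullet> (xs - x))
           \<ge> 2 * mu_t * (infdist x {z \<in> D. \<forall>y\<in>D. f z \<le> f y})\<^sup>2)"
proof (intro ballI)
  fix x xs assume xD: "x \<in> D" and xsX: "xs \<in> {z \<in> D. \<forall>y\<in>D. f z \<le> f y}"
  define X where "X = {z \<in> D. \<forall>y\<in>D. f z \<le> f y}"
  define S where "S = (\<lambda>x. A *v x) ` D"
  define G where "G = Sup ((\<lambda>x. norm (gg (A *v x))) ` D)"
  define M where "M = diameter D"
  define MA where "MA = diameter S"
  define K where "K = norm b * M + 3 * G * MA + 2 / mu_g * (G\<^sup>2 + 1)"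
  have xsD: "xs \<in> D" and xsmin: "\<And>y. y \<in> D \<Longrightarrow> f xs \<le> f y" using xsX by auto
  have convD: "convex D" unfolding D_def by (rule polyhedron_convex)
  have compD: "compact D" using D_bdd polyhedron_closed[of B c] unfolding D_def
    by (simp add: compact_eq_bounded_closed)
  have linA: "linear (\<lambda>x. A *v x)" by (rule matrix_vector_mul_linear)
  have compS: "compact S" unfolding S_def
    by (intro compact_continuous_image compD linear_continuous_on matrix_vector_mul_bounded_linear)
  have "compact (gg ` S)"
    by (rule compact_continuous_image[OF continuous_on_subset[OF gg_cont]]) (use compS U_sup S_def in auto)
  then obtain Bd where Bd: "\<And>z. z \<in> S \<Longrightarrow> norm (gg z) \<le> Bd"
    using compact_imp_bounded bounded_iff by (metis imageI)
  have bdd: "bdd_above ((\<lambda>x. norm (gg (A *v x))) ` D)"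
    using Bd unfolding S_def by (intro bdd_aboveI[of _ Bd]) auto
  have Gb: "\<And>z. z \<in> D \<Longrightarrow> norm (gg (A *v z)) \<le> G"
    unfolding G_def using bdd by (intro cSup_upper) auto
  have G0: "0 \<le> G" using Gb[OF xD] norm_ge_zero order_trans by blast
  have bddS: "bounded S" unfolding S_def by (intro bounded_linear_image D_bdd matrix_vector_mul_bounded_linear)
  have gi: "\<And>p q. p \<in> D \<Longrightarrow> q \<in> D \<Longrightarrow>
      g (A *v p) + gg (A *v p) \<bullet> (A *v q - A *v p) + mu_g/2 * (norm (A *v q - A *v p))\<^sup>2 \<le> g (A *v q)"
    using g_sc U_sup g_diff unfolding S_def by (intro grad_ineq) auto
  define ts where "ts = A *v xs"
  define ss where "ss = b \<bullet> xs"
  have Xeq: "X = {y \<in> polyhedron B c. A *v y = ts \<and> b \<bullet> y = ss}"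
  proof
    show "X \<subseteq> {y \<in> polyhedron B c. A *v y = ts \<and> b \<bullet> y = ss}"
    proof
      fix z assume "z \<in> X"
      hence zD: "z \<in> D" and zmin: "\<And>y. y \<in> D \<Longrightarrow> f z \<le> f y" unfolding X_def by auto
      have fz: "f z = f xs" using zmin[OF xsD] xsmin[OF zD] by simp
      define m where "m = (1/2::real) *\<^sub>R z + (1 - 1/2) *\<^sub>R xs"
      have mD: "m \<in> D" unfolding m_def using convD zD xsD by (intro convexD) auto
      have Am: "A *v m = (1/2::real) *\<^sub>R (A *v z) + (1 - 1/2) *\<^sub>R (A *v xs)"
        unfolding m_def by (simp add: matrix_vector_right_distrib matrix_vector_mult_scaleR)
      have "g (A *v m) \<le> 1/2 * g (A *v z) + (1 - 1/2) * g (A *v xs) - mu_g/2 * (1/2) * (1 - 1/2) * (norm (A *v z - A *v xs))\<^sup>2"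
      proof -
        have "\<forall>t. 0 \<le> t \<and> t \<le> 1 \<longrightarrow> g (t *\<^sub>R (A *v z) + (1 - t) *\<^sub>R (A *v xs)) \<le> t * g (A *v z) + (1 - t) * g (A *v xs) - mu_g / 2 * t * (1 - t) * (norm (A *v z - A *v xs))\<^sup>2"
          using g_sc zD xsD unfolding strongly_convex_on_def by blast
        from this[rule_format, of "1/2"] show ?thesis unfolding Am by simp
      qed
      moreover have "b \<bullet> m = 1/2 * (b \<bullet> z) + 1/2 * (b \<bullet> xs)" unfolding m_def by (simp add: inner_add_right)
      moreover have "f xs \<le> f m" using xsmin[OF mD] .
      ultimately have "mu_g/8 * (norm (A *v z - A *v xs))\<^sup>2 \<le> 0"
        using fz unfolding f_def by simp
      hence "(norm (A *v z - A *v xs))\<^sup>2 \<le> 0" using mu_pos by (simp add: mult_le_0_iff)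
      hence Az: "A *v z = ts" unfolding ts_def by simp
      hence "b \<bullet> z = ss" using fz unfolding f_def ss_def ts_def by simp
      thus "z \<in> {y \<in> polyhedron B c. A *v y = ts \<and> b \<bullet> y = ss}" using Az zD D_def by auto
    qed
  next
    show "{y \<in> polyhedron B c. A *v y = ts \<and> b \<bullet> y = ss} \<subseteq> X"
      using xsmin unfolding X_def D_def f_def ts_def ss_def by auto
  qed
  have "infdist x X \<le> \<theta> * norm (A *v x - ts, b \<bullet> x - ss)"
  proof -
    have "xs \<in> {y \<in> polyhedron B c. A *v y = ts \<and> b \<bullet> y = ss}" using xsD D_def ts_def ss_def by auto
    thus ?thesis using hoff xD unfolding hoffman_constant_def Let_def Xeq D_def by blast
  qed
  define r where "r = norm (A *v x - ts)"
  define u where "u = b \<bullet> x - ss"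
  define v where "v = g (A *v x) - g ts"
  define \<Delta> where "\<Delta> = f x - f xs"
  define d where "d = infdist x X"
  have th: "\<theta> > 0" using hoff unfolding hoffman_constant_def by auto
  have dle: "d \<le> \<theta> * sqrt (r\<^sup>2 + u\<^sup>2)"
    using \<open>infdist x X \<le> _\<close> unfolding d_def r_def u_def by (simp add: norm_prod_def)
  have d0: "0 \<le> d" unfolding d_def by (rule infdist_nonneg)
  have d2: "d\<^sup>2 \<le> \<theta>\<^sup>2 * (r\<^sup>2 + u\<^sup>2)"
  proof -
    have "d\<^sup>2 \<le> (\<theta> * sqrt (r\<^sup>2 + u\<^sup>2))\<^sup>2" using dle d0 by (rule power_mono)
    thus ?thesis by (simp add: power_mult_distrib)
  qed
  have Deq: "\<Delta> = u + v" unfolding \<Delta>_def u_def v_def f_def ss_def ts_def by simp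
  have D0: "0 \<le> \<Delta>" unfolding \<Delta>_def using xsmin[OF xD] by simp
  have r0: "0 \<le> r" unfolding r_def by simp
  have gi1: "g (A *v x) + gg (A *v x) \<bullet> (ts - A *v x) + mu_g/2 * r\<^sup>2 \<le> g ts"
    using gi[OF xD xsD] unfolding ts_def r_def by (simp add: norm_minus_commute)
  have gi2: "g ts + gg ts \<bullet> (A *v x - ts) + mu_g/2 * r\<^sup>2 \<le> g (A *v x)"
    using gi[OF xsD xD] unfolding ts_def r_def by simp
  have cs1: "\<bar>gg (A *v x) \<bullet> (ts - A *v x)\<bar> \<le> G * r"
  proof -
    have "\<bar>gg (A *v x) \<bullet> (ts - A *v x)\<bar> \<le> norm (gg (A *v x)) * norm (ts - A *v x)" by (rule Cauchy_Schwarz_ineq2)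
    also have "\<dots> \<le> G * r" unfolding r_def using Gb[OF xD] by (simp add: norm_minus_commute mult_right_mono)
    finally show ?thesis .
  qed
  have cs2: "\<bar>gg ts \<bullet> (A *v x - ts)\<bar> \<le> G * r"
  proof -
    have "\<bar>gg ts \<bullet> (A *v x - ts)\<bar> \<le> norm (gg ts) * norm (A *v x - ts)" by (rule Cauchy_Schwarz_ineq2)
    also have "\<dots> \<le> G * r" unfolding r_def ts_def using Gb[OF xsD] by (simp add: mult_right_mono)
    finally show ?thesis .
  qed
  have mr0: "0 \<le> mu_g/2 * r\<^sup>2" using mu_pos by simp
  have vup: "v \<le> G * r" using gi1 cs1 mr0 unfolding v_def by linarith
  have vlo: "- (G * r) \<le> v" using gi2 cs2 mr0 unfolding v_def by linarith
  have gradeq: "grad_f x \<bullet> (xs - x) = gg (A *v x) \<bullet> (ts - A *v x) - u"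
  proof -
    have "(transpose A *v gg (A *v x)) \<bullet> (xs - x) = gg (A *v x) \<bullet> (A *v (xs - x))" by (rule transp_inner)
    thus ?thesis unfolding grad_f_def u_def ss_def ts_def
      by (simp only: inner_add_left matrix_vector_mult_diff_distrib inner_diff_right)
  qed
  have LHS: "f xs - f x - 2 * (grad_f x \<bullet> (xs - x)) \<ge> \<Delta> + mu_g * r\<^sup>2"
    using gi1 Deq unfolding gradeq \<Delta>_def v_def by (simp add: algebra_simps)
  have uM: "\<bar>u\<bar> \<le> norm b * M"
  proof -
    have "\<bar>u\<bar> = \<bar>b \<bullet> (x - xs)\<bar>" unfolding u_def ss_def by (simp add: inner_diff_right)
    also have "\<dots> \<le> norm b * norm (x - xs)" by (rule Cauchy_Schwarz_ineq2)
    also have "\<dots> \<le> norm b * M" unfolding M_def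
      using diameter_bounded_bound[OF D_bdd xD xsD] by (simp add: dist_norm mult_left_mono)
    finally show ?thesis .
  qed
  have rM: "r \<le> MA" unfolding MA_def r_def ts_def
    using diameter_bounded_bound[OF bddS, of "A *v x" "A *v xs"] xD xsD unfolding S_def by (simp add: dist_norm)
  have M0: "0 \<le> M" unfolding M_def using diameter_bounded_bound[OF D_bdd xD xD] by simp
  have uabs: "\<bar>u\<bar> \<le> \<Delta> + G * r" using Deq vup vlo D0 by linarith
  have u2: "u\<^sup>2 \<le> (\<Delta> + G * r)\<^sup>2"
    using power_mono[OF uabs abs_ge_zero, of 2] by simp
  have Dle: "\<Delta> \<le> norm b * M + G * MA"
    using Deq vup uM rM G0 mult_left_mono[OF rM G0] by linarith
  have e1: "\<Delta>\<^sup>2 \<le> \<Delta> * (norm b * M + G * MA)"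
    using mult_left_mono[OF Dle D0] by (simp add: power2_eq_square)
  have e2: "2 * G * \<Delta> * r \<le> 2 * G * \<Delta> * MA"
    using rM G0 D0 by (simp add: mult_left_mono)
  have u2b: "u\<^sup>2 \<le> \<Delta> * (norm b * M + 3 * G * MA) + G\<^sup>2 * r\<^sup>2"
  proof -
    have "(\<Delta> + G * r)\<^sup>2 = \<Delta>\<^sup>2 + 2 * G * \<Delta> * r + G\<^sup>2 * r\<^sup>2" by (simp add: power2_eq_square algebra_simps)
    thus ?thesis using u2 e1 e2 by (simp add: algebra_simps)
  qed
  have MA0: "0 \<le> MA" using rM r0 by linarith
  have P0: "0 \<le> norm b * M + 3 * G * MA" using M0 MA0 G0 by simp
  have K1: "r\<^sup>2 + u\<^sup>2 \<le> K * (\<Delta> + mu_g * r\<^sup>2)"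
  proof -
    have "K * (\<Delta> + mu_g * r\<^sup>2) = \<Delta> * (norm b * M + 3 * G * MA) + 2 / mu_g * (G\<^sup>2 + 1) * \<Delta>
         + mu_g * r\<^sup>2 * (norm b * M + 3 * G * MA) + 2 * (G\<^sup>2 + 1) * r\<^sup>2"
      unfolding K_def using mu_pos by (simp add: field_simps)
    moreover have "0 \<le> 2 / mu_g * (G\<^sup>2 + 1) * \<Delta>" using mu_pos D0 by simp
    moreover have "0 \<le> mu_g * r\<^sup>2 * (norm b * M + 3 * G * MA)" using mu_pos P0 by simp
    moreover have "2 * (G\<^sup>2 + 1) * r\<^sup>2 = 2 * r\<^sup>2 + 2 * (G\<^sup>2 * r\<^sup>2)" by (simp add: algebra_simps)
    moreover have "0 \<le> G\<^sup>2 * r\<^sup>2" "0 \<le> r\<^sup>2" by simp_all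
    ultimately show ?thesis using u2b by linarith
  qed
  have Kpos: "0 < K" unfolding K_def using P0 mu_pos by (simp add: add_pos_nonneg add_nonneg_pos)
  have fin: "2 * (1 / (2 * \<theta>\<^sup>2 * K)) * d\<^sup>2 \<le> \<Delta> + mu_g * r\<^sup>2"
  proof -
    have "d\<^sup>2 \<le> \<theta>\<^sup>2 * (K * (\<Delta> + mu_g * r\<^sup>2))"
      using d2 mult_left_mono[OF K1, of "\<theta>\<^sup>2"] by simp
    thus ?thesis using th Kpos by (simp add: field_simps)
  qed
  show "let G = Sup ((\<lambda>x. norm (gg (A *v x))) ` D);
          M = diameter D;
          M_A = diameter ((\<lambda>x. A *v x) ` D);
          mu_t = 1 / (2 * \<theta>\<^sup>2 * (norm b * M + 3 * G * M_A + 2 / mu_g * (G\<^sup>2 + 1)))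
      in f xs - f x - 2 * (grad_f x \<bullet> (xs - x))
           \<ge> 2 * mu_t * (infdist x {z \<in> D. \<forall>y\<in>D. f z \<le> f y})\<^sup>2"
    unfolding Let_def using fin LHS
    unfolding K_def G_def M_def MA_def S_def d_def X_def by linarith
qed
end
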